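(* Let $n\geq 2$ and $r\geq 1$, and let $\rho$ be a partition of $[n]\times[r]$ such that $\rho\vee\pi=\widehat{1}$, where $\pi=\{\pi_1,\dots,\pi_n\}$ with $\pi_k=\{(k,1),\dots,(k,r)\}$. Then there exists $i\in\{1,\dots,n\}$ such that the set partition $\rho^{(i)}:=\{b\setminus\pi_i : b\in\rho,\ b\not\subset\pi_i\}$ of $(\{1,\dots,n\}\setminus\{i\})\times[r]$ is connected, i.e. $\rho^{(i)}\vee\{\pi_j : j\neq i\}$ is the one-block partition of $(\{1,\dots,n\}\setminus\{i\})\times[r]$.
   Context: $[n]=\{1,\dots,n\}$. For a finite set, $\rho\vee\sigma$ denotes the finest partition coarser than both $\rho$ and $\sigma$, and $\widehat{1}$ denotes the one-block partition. A partition $\rho$ of $\eta\times[r]$ ($\eta\subset[n]$) is called connected if $\rho\vee\{\pi_k:k\in\eta\}$ is the one-block partition of $\eta\times[r]$. *)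

theory Defs
  imports Main "HOL-Library.Disjoint_Sets"
begin

definition finer :: "'a set set \<Rightarrow> 'a set set \<Rightarrow> bool" where
  "finer \<rho> \<sigma> \<longleftrightarrow> (\<forall>b\<in>\<rho>. \<exists>c\<in>\<sigma>. b \<subseteq> c)"

definition pjoin :: "'a set \<Rightarrow> 'a set set \<Rightarrow> 'a set set \<Rightarrow> 'a set set" where
  "pjoin X \<rho> \<sigma> = (THE \<tau>. partition_on X \<tau> \<and> finer \<rho> \<tau> \<and> finer \<sigma> \<tau> \<and>
      (\<forall>\<tau>'. partition_on X \<tau>' \<and> finer \<rho> \<tau>' \<and> finer \<sigma> \<tau>' \<longrightarrow> finer \<tau> \<tau>'))"

definition piblk :: "nat \<Rightarrow> nat \<Rightarrow> (nat \<times> nat) set" where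
  "piblk r k = {k} \<times> {1..r}"

definition restr :: "nat \<Rightarrow> (nat \<times> nat) set set \<Rightarrow> nat \<Rightarrow> (nat \<times> nat) set set" where
  "restr r \<rho> i = {b - piblk r i | b. b \<in> \<rho> \<and> \<not> b \<subseteq> piblk r i}"

end

theory Submission
  imports Defs
begin

definition sat :: "'a set set \<Rightarrow> 'a set \<Rightarrow> bool" where
  "sat Q S \<longleftrightarrow> (\<forall>b\<in>Q. b \<subseteq> S \<or> b \<inter> S = {})"

lemma part_same:
  assumes "partition_on X P" "c \<in> P" "c' \<in> P" "y \<in> c" "y \<in> c'"
  shows "c = c'"
  using assms partition_onD2 disjointD by fastforce

lemma finer_antisym:
  assumes "partition_on X P" "partition_on X Q" "finer P Q" "finer Q P"
  shows "P = Q"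
proof -
  have *: "P \<subseteq> Q" if h: "partition_on X P" "partition_on X Q" "finer P Q" "finer Q P" for P Q
  proof
    fix b assume b: "b \<in> P"
    obtain c where c: "c \<in> Q" "b \<subseteq> c" using h(3) b unfolding finer_def by blast
    obtain d where d: "d \<in> P" "c \<subseteq> d" using h(4) c unfolding finer_def by blast
    obtain y where y: "y \<in> b" using b h(1) partition_onD3 by fastforce
    have "b = d" using part_same[OF h(1) b d(1)] y c d by blast
    then have "b = c" using c d by blast
    then show "b \<in> Q" using c by simp
  qed
  show ?thesis using *[OF assms] *[OF assms(2,1,4,3)] by blast
qed

lemma join_exists:
  assumes "partition_on X \<rho>" "partition_on X \<sigma>"
  shows "\<exists>\<tau>. partition_on X \<tau> \<and> finer \<rho> \<tau> \<and> finer \<sigma> \<tau> \<and>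
      (\<forall>\<tau>'. partition_on X \<tau>' \<and> finer \<rho> \<tau>' \<and> finer \<sigma> \<tau>' \<longrightarrow> finer \<tau> \<tau>')"
proof -
  define R where "R = {(x,y). \<exists>b\<in>\<rho>\<union>\<sigma>. x\<in>b \<and> y\<in>b}"
  define E where "E = R\<^sup>+"
  have RX: "R \<subseteq> X \<times> X" using partition_onD1[OF assms(1)] partition_onD1[OF assms(2)] unfolding R_def by blast
  have Rrefl: "(x,x) \<in> R" if "x \<in> X" for x
    using that partition_onD1[OF assms(1)] unfolding R_def by blast
  have EX: "E \<subseteq> X \<times> X" unfolding E_def using RX trancl_subset_Sigma by blast
  have "sym R" unfolding R_def sym_def by blast
  then have symE: "sym E" unfolding E_def using sym_trancl by blast
  have eq: "equiv X E" unfolding equiv_def refl_on_def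
    using EX symE Rrefl trans_trancl[of R] unfolding E_def by blast
  have blk: "b \<subseteq> E``{x}" if "b \<in> \<rho> \<union> \<sigma>" "x \<in> b" for b x
    using that unfolding E_def R_def by blast
  have fin: "finer P (X // E)" if h: "partition_on X P" "P \<subseteq> \<rho> \<union> \<sigma>" for P
    unfolding finer_def
  proof
    fix b assume b: "b \<in> P"
    obtain x where x: "x \<in> b" using b h(1) partition_onD3 by fastforce
    have "x \<in> X" using partition_onD1[OF h(1)] b x by blast
    then have "E``{x} \<in> X // E" by (simp add: quotientI)
    then show "\<exists>c\<in>X // E. b \<subseteq> c" using blk[of b x] b x h(2) by blast
  qed
  have mini: "finer (X // E) \<tau>'" if t: "partition_on X \<tau>'" "finer \<rho> \<tau>'" "finer \<sigma> \<tau>'" for \<tau>'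
    unfolding finer_def
  proof
    fix q assume "q \<in> X // E"
    then obtain x where x: "x \<in> X" "q = E``{x}" by (auto elim: quotientE)
    obtain c where c: "c \<in> \<tau>'" "x \<in> c" using partition_onD1[OF t(1)] x by blast
    have "y \<in> c" if "(x,y) \<in> E" for y
      using that unfolding E_def
    proof (induction rule: trancl_induct)
      case (base y)
      then obtain b where b: "b \<in> \<rho> \<union> \<sigma>" "x \<in> b" "y \<in> b" unfolding R_def by blast
      then obtain c' where "c' \<in> \<tau>'" "b \<subseteq> c'" using t(2,3) unfolding finer_def by blast
      then show ?case using part_same[OF t(1) c(1), of c' x] b c by blast
    next
      case (step y z)
      then obtain b where b: "b \<in> \<rho> \<union> \<sigma>" "y \<in> b" "z \<in> b" unfolding R_def by blast
      then obtain c' where "c' \<in> \<tau>'" "b \<subseteq> c'" using t(2,3) unfolding finer_def by blast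
      then show ?case using part_same[OF t(1) c(1), of c' y] b step by blast
    qed
    then show "\<exists>c\<in>\<tau>'. q \<subseteq> c" using c x by blast
  qed
  show ?thesis
    apply (rule exI[of _ "X // E"])
    using partition_on_quotient[OF eq] fin[OF assms(1)] fin[OF assms(2)] mini by blast
qed

lemma join_unique:
  assumes "partition_on X \<rho>" "partition_on X \<sigma>"
    and "partition_on X \<tau> \<and> finer \<rho> \<tau> \<and> finer \<sigma> \<tau> \<and>
      (\<forall>\<tau>'. partition_on X \<tau>' \<and> finer \<rho> \<tau>' \<and> finer \<sigma> \<tau>' \<longrightarrow> finer \<tau> \<tau>')"
  shows "pjoin X \<rho> \<sigma> = \<tau>"
  unfolding pjoin_def
  apply (rule the_equality)
   apply (rule assms(3))
  using assms(3) finer_antisym by blast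

lemma join_one:
  assumes "partition_on X \<rho>" "partition_on X \<sigma>" "X \<noteq> {}"
    and conn: "\<And>S. S \<subseteq> X \<Longrightarrow> sat \<rho> S \<Longrightarrow> sat \<sigma> S \<Longrightarrow> S = {} \<or> S = X"
  shows "pjoin X \<rho> \<sigma> = {X}"
proof (rule join_unique[OF assms(1,2)], intro conjI allI impI)
  show "partition_on X {X}" using assms(3) by (rule partition_on_space)
  show "finer \<rho> {X}" "finer \<sigma> {X}" using partition_onD1[OF assms(1)] partition_onD1[OF assms(2)] unfolding finer_def by blast+
  fix \<tau>' assume t0: "partition_on X \<tau>' \<and> finer \<rho> \<tau>' \<and> finer \<sigma> \<tau>'"
  then have t: "partition_on X \<tau>'" "finer \<rho> \<tau>'" "finer \<sigma> \<tau>'" by auto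
  obtain x where x: "x \<in> X" using assms(3) by blast
  obtain c where c: "c \<in> \<tau>'" "x \<in> c" using partition_onD1[OF t(1)] x by blast
  have cX: "c \<subseteq> X" using partition_onD1[OF t(1)] c by blast
  have "sat Q c" if fQ: "finer Q \<tau>'" for Q
    unfolding sat_def
  proof
    fix b assume b: "b \<in> Q"
    obtain c' where c': "c' \<in> \<tau>'" "b \<subseteq> c'" using fQ b unfolding finer_def by blast
    show "b \<subseteq> c \<or> b \<inter> c = {}"
    proof (cases "b \<inter> c = {}")
      case False
      then obtain y where "y \<in> b" "y \<in> c" by blast
      then have "c' = c" using part_same[OF t(1) c'(1) c(1), of y] c' by blast
      then show ?thesis using c' by blast
    qed simp
  qed
  then have "c = X" using conn[OF cX] c t by blast
  then show "finer {X} \<tau>'" using c unfolding finer_def by blast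
qed

lemma join_one_conv:
  assumes "partition_on X \<rho>" "partition_on X \<sigma>" "pjoin X \<rho> \<sigma> = {X}"
    and S: "S \<subseteq> X" "sat \<rho> S" "sat \<sigma> S"
  shows "S = {} \<or> S = X"
proof (rule ccontr)
  assume ne: "\<not> (S = {} \<or> S = X)"
  obtain \<tau> where t: "partition_on X \<tau> \<and> finer \<rho> \<tau> \<and> finer \<sigma> \<tau> \<and>
      (\<forall>\<tau>'. partition_on X \<tau>' \<and> finer \<rho> \<tau>' \<and> finer \<sigma> \<tau>' \<longrightarrow> finer \<tau> \<tau>')"
    using join_exists[OF assms(1,2)] by blast
  have "\<tau> = {X}" using join_unique[OF assms(1,2) t] assms(3) by simp
  define T where "T = {S, X - S}"
  have pT: "partition_on X T" unfolding T_def partition_on_def disjoint_def using ne S(1) by auto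
  have "finer Q T" if h: "sat Q S" "partition_on X Q" for Q
    unfolding finer_def T_def
  proof
    fix b assume b: "b \<in> Q"
    have "b \<subseteq> X" using partition_onD1[OF h(2)] b by blast
    moreover have "b \<subseteq> S \<or> b \<inter> S = {}" using h(1) b unfolding sat_def by blast
    ultimately show "\<exists>c\<in>{S, X - S}. b \<subseteq> c" by blast
  qed
  then have "finer \<rho> T" "finer \<sigma> T" using assms(1,2) S(2,3) by auto
  moreover have "\<forall>\<tau>'. partition_on X \<tau>' \<and> finer \<rho> \<tau>' \<and> finer \<sigma> \<tau>' \<longrightarrow> finer \<tau> \<tau>'"
    using t by blast
  ultimately have "finer \<tau> T" using pT by blast
  then have "finer {X} T" using \<open>\<tau> = {X}\<close> by simp
  then show False using ne S(1) unfolding finer_def T_def by blast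
qed


lemma part_piblk:
  assumes "r \<ge> (1::nat)"
  shows "partition_on (W \<times> {1..r}) (piblk r ` W)"
proof -
  have "{} \<notin> piblk r ` W" using assms unfolding piblk_def by force
  then show ?thesis unfolding partition_on_def disjoint_def piblk_def by auto
qed

definition adj :: "(nat \<times> nat) set set \<Rightarrow> nat \<Rightarrow> nat \<Rightarrow> bool" where
  "adj \<rho> k l \<longleftrightarrow> (\<exists>b\<in>\<rho>. \<exists>x y. (k,x) \<in> b \<and> (l,y) \<in> b)"

lemma adj_sym: "adj \<rho> k l \<Longrightarrow> adj \<rho> l k"
  unfolding adj_def by blast

primrec Rs :: "(nat \<times> nat) set set \<Rightarrow> nat set \<Rightarrow> nat \<Rightarrow> nat set" where
  "Rs \<rho> V 0 = {1}"
| "Rs \<rho> V (Suc k) = Rs \<rho> V k \<union> {w\<in>V. \<exists>u\<in>Rs \<rho> V k. adj \<rho> u w}"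

lemma Rs_mono: "j \<le> k \<Longrightarrow> Rs \<rho> V j \<subseteq> Rs \<rho> V k"
  by (induction k) (auto simp: le_Suc_eq)

lemma Rs_sub: "1 \<in> V \<Longrightarrow> Rs \<rho> V k \<subseteq> V"
  by (induction k) auto

lemma Rs_full:
  assumes fin: "finite V" and one: "1 \<in> V"
    and conn: "\<And>A. A \<subseteq> V \<Longrightarrow> (\<forall>k\<in>A. \<forall>l\<in>V. adj \<rho> k l \<longrightarrow> l \<in> A) \<Longrightarrow> A = {} \<or> A = V"
  shows "\<exists>k. Rs \<rho> V k = V"
proof (rule ccontr)
  assume no: "\<not> ?thesis"
  have strict: "Rs \<rho> V k \<subset> Rs \<rho> V (Suc k)" for k
  proof -
    have "Rs \<rho> V k \<noteq> Rs \<rho> V (Suc k)"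
    proof
      assume eq: "Rs \<rho> V k = Rs \<rho> V (Suc k)"
      have "\<forall>a\<in>Rs \<rho> V k. \<forall>l\<in>V. adj \<rho> a l \<longrightarrow> l \<in> Rs \<rho> V k"
        using eq by auto
      moreover have "1 \<in> Rs \<rho> V k" using Rs_mono[of 0 k] by auto
      ultimately have "Rs \<rho> V k = V" using conn[OF Rs_sub[OF one]] by blast
      then show False using no by blast
    qed
    then show ?thesis by auto
  qed
  have "card (Rs \<rho> V k) \<ge> Suc k" for k
  proof (induction k)
    case 0 then show ?case by simp
  next
    case (Suc k)
    have "finite (Rs \<rho> V (Suc k))" using Rs_sub[OF one] fin finite_subset by blast
    then have "card (Rs \<rho> V k) < card (Rs \<rho> V (Suc k))" using strict psubset_card_mono by blast
    then show ?case using Suc by simp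
  qed
  moreover have "card (Rs \<rho> V (card V)) \<le> card V" using Rs_sub[OF one] fin card_mono by blast
  ultimately show False using Suc_n_not_le_n order_trans by blast
qed

theorem lemma2p6:
  fixes n r :: nat and \<rho> :: "(nat \<times> nat) set set"
  assumes "n \<ge> 2" and "r \<ge> 1"
    and "partition_on ({1..n} \<times> {1..r}) \<rho>"
    and "pjoin ({1..n} \<times> {1..r}) \<rho> (piblk r ` {1..n}) = {{1..n} \<times> {1..r}}"
  shows "\<exists>i\<in>{1..n}.
           partition_on (({1..n} - {i}) \<times> {1..r}) (restr r \<rho> i) \<and>
           pjoin (({1..n} - {i}) \<times> {1..r}) (restr r \<rho> i) (piblk r ` ({1..n} - {i}))
             = {({1..n} - {i}) \<times> {1..r}}"
proof -
  define V where "V = {1..n}"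
  define X where "X = V \<times> {1..r}"
  have pr: "partition_on X \<rho>" using assms(3) unfolding X_def V_def .
  have pX: "\<Union>\<rho> = X" using partition_onD1[OF pr] by simp
  have ps: "partition_on X (piblk r ` V)" unfolding X_def using part_piblk[OF assms(2)] .
  have one: "1 \<in> V" unfolding V_def using assms(1) by simp
  have finV: "finite V" unfolding V_def by simp
  have conn: "A = {} \<or> A = V" if A: "A \<subseteq> V" "\<forall>k\<in>A. \<forall>l\<in>V. adj \<rho> k l \<longrightarrow> l \<in> A" for A
  proof -
    define S where "S = A \<times> {1..r}"
    have "S \<subseteq> X" unfolding S_def X_def using A(1) by blast
    moreover have "sat (piblk r ` V) S" unfolding sat_def S_def piblk_def by auto
    moreover have "sat \<rho> S" unfolding sat_def
    proof
      fix b assume b: "b \<in> \<rho>"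
      show "b \<subseteq> S \<or> b \<inter> S = {}"
      proof (cases "b \<inter> S = {}")
        case False
        then obtain k x where kx: "(k,x) \<in> b" "k \<in> A" unfolding S_def by blast
        have "b \<subseteq> S"
        proof
          fix p assume p: "p \<in> b"
          obtain l y where ly: "p = (l,y)" by (cases p)
          have "(l,y) \<in> X" using b p ly pX by blast
          then have "l \<in> V" "y \<in> {1..r}" unfolding X_def by auto
          moreover have "adj \<rho> k l" unfolding adj_def using b kx p ly by blast
          ultimately show "p \<in> S" using A kx ly unfolding S_def by blast
        qed
        then show ?thesis by blast
      qed simp
    qed
    ultimately have "S = {} \<or> S = X"
      using join_one_conv[OF pr ps] assms(4) unfolding X_def V_def by blast
    moreover have "S = {} \<Longrightarrow> A = {}" unfolding S_def using assms(2) by auto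
    moreover have "S = X \<Longrightarrow> A = V"
    proof -
      assume "S = X"
      then have "V \<times> {1} \<subseteq> A \<times> {1..r}" unfolding S_def X_def using assms(2) by auto
      then show "A = V" using A(1) by blast
    qed
    ultimately show ?thesis by blast
  qed
  obtain m where m: "Rs \<rho> V m = V" using Rs_full[OF finV one conn] by blast
  define m0 where "m0 = (LEAST k. Rs \<rho> V k = V)"
  have m0: "Rs \<rho> V m0 = V" unfolding m0_def using m by (rule LeastI)
  have "m0 \<noteq> 0"
  proof
    assume "m0 = 0"
    then have "V = {1}" using m0 by simp
    moreover have "(2::nat) \<in> V" unfolding V_def using assms(1) by simp
    ultimately show False by simp
  qed
  then obtain p where p: "m0 = Suc p" using not0_implies_Suc by blast
  have "Rs \<rho> V p \<noteq> V" using not_less_Least[of p "\<lambda>k. Rs \<rho> V k = V"] p unfolding m0_def by simp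
  then obtain i where i: "i \<in> V" "i \<notin> Rs \<rho> V p" using Rs_sub[OF one, of \<rho> p] by blast
  have i1: "i \<noteq> 1" using i(2) Rs_mono[of 0 p \<rho> V] by auto
  define V' where "V' = V - {i}"
  define X' where "X' = V' \<times> {1..r}"
  have conn': "A = {} \<or> A = V'" if A: "A \<subseteq> V'" "\<forall>k\<in>A. \<forall>l\<in>V'. adj \<rho> k l \<longrightarrow> l \<in> A" for A
  proof -
    have main: "B = V'" if B: "B \<subseteq> V'" "\<forall>k\<in>B. \<forall>l\<in>V'. adj \<rho> k l \<longrightarrow> l \<in> B" "1 \<in> B" for B
    proof -
      have "j \<le> p \<longrightarrow> Rs \<rho> V j \<subseteq> B" for j
      proof (induction j)
        case 0 then show ?case using B(3) by simp
      next
        case (Suc j)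
        show ?case
        proof
          assume j: "Suc j \<le> p"
          have "i \<notin> Rs \<rho> V (Suc j)" using i(2) Rs_mono[OF j] by blast
          then show "Rs \<rho> V (Suc j) \<subseteq> B" using Suc j B(2) unfolding V'_def by auto
        qed
      qed
      then have Rp: "Rs \<rho> V p \<subseteq> B" by blast
      have "V' \<subseteq> B"
      proof
        fix w assume w: "w \<in> V'"
        then have "w \<in> Rs \<rho> V (Suc p)" using m0 p unfolding V'_def by blast
        then show "w \<in> B" using Rp B(2) w by auto
      qed
      then show ?thesis using B(1) by blast
    qed
    show ?thesis
    proof (cases "1 \<in> A")
      case True then show ?thesis using main[OF A] by blast
    next
      case False
      have "V' - A = V'"
      proof (rule main)
        show "\<forall>k\<in>V' - A. \<forall>l\<in>V'. adj \<rho> k l \<longrightarrow> l \<in> V' - A" using A(2) adj_sym by blast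
        show "1 \<in> V' - A" using False one i1 unfolding V'_def by blast
      qed simp
      then show ?thesis using A(1) by blast
    qed
  qed
  have prest: "partition_on X' (restr r \<rho> i)"
  proof -
    have P: "piblk r i = {i} \<times> {1..r}" unfolding piblk_def by simp
    have "\<Union>(restr r \<rho> i) = X'"
    proof
      show "\<Union>(restr r \<rho> i) \<subseteq> X'"
      proof
        fix q assume "q \<in> \<Union>(restr r \<rho> i)"
        then obtain b where b: "b \<in> \<rho>" "q \<in> b" "q \<notin> piblk r i" unfolding restr_def by blast
        then have "q \<in> X" using pX by blast
        then show "q \<in> X'" using b(3) unfolding X_def X'_def V'_def P by auto
      qed
      show "X' \<subseteq> \<Union>(restr r \<rho> i)"
      proof
        fix q assume q: "q \<in> X'"
        then have "q \<in> X" unfolding X'_def X_def V'_def by blast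
        then obtain b where b: "b \<in> \<rho>" "q \<in> b" using pX by blast
        have "q \<notin> piblk r i" using q unfolding X'_def V'_def P by auto
        then have "b - piblk r i \<in> restr r \<rho> i" unfolding restr_def using b by blast
        then show "q \<in> \<Union>(restr r \<rho> i)" using b \<open>q \<notin> piblk r i\<close> by blast
      qed
    qed
    moreover have "disjoint (restr r \<rho> i)"
      unfolding disjoint_def restr_def
      using partition_onD2[OF pr] unfolding disjoint_def by blast
    moreover have "{} \<notin> restr r \<rho> i" unfolding restr_def by blast
    ultimately show ?thesis unfolding partition_on_def by blast
  qed
  have ps': "partition_on X' (piblk r ` V')" unfolding X'_def using part_piblk[OF assms(2)] .
  have X'ne: "X' \<noteq> {}" unfolding X'_def V'_def using one i1 assms(2) by auto
  have "pjoin X' (restr r \<rho> i) (piblk r ` V') = {X'}"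
  proof (rule join_one[OF prest ps' X'ne])
    fix S assume S: "S \<subseteq> X'" "sat (restr r \<rho> i) S" "sat (piblk r ` V') S"
    define A where "A = {k\<in>V'. piblk r k \<subseteq> S}"
    have SA: "S = A \<times> {1..r}"
    proof
      show "A \<times> {1..r} \<subseteq> S" unfolding A_def piblk_def by blast
      show "S \<subseteq> A \<times> {1..r}"
      proof
        fix q assume q: "q \<in> S"
        obtain k x where kx: "q = (k,x)" by (cases q)
        have k: "k \<in> V'" "x \<in> {1..r}" using S(1) q kx unfolding X'_def by auto
        then have "q \<in> piblk r k" using kx unfolding piblk_def by simp
        then have "piblk r k \<subseteq> S" using S(3) q k unfolding sat_def by blast
        then show "q \<in> A \<times> {1..r}" using k kx unfolding A_def by blast
      qed
    qed
    have "\<forall>k\<in>A. \<forall>l\<in>V'. adj \<rho> k l \<longrightarrow> l \<in> A"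
    proof (intro ballI impI)
      fix k l assume k: "k \<in> A" and l: "l \<in> V'" and a: "adj \<rho> k l"
      then obtain b x y where b: "b \<in> \<rho>" "(k,x) \<in> b" "(l,y) \<in> b" unfolding adj_def by blast
      have "(k,x) \<in> X" using b pX by blast
      then have x: "x \<in> {1..r}" unfolding X_def by blast
      have ki: "k \<noteq> i" "l \<noteq> i" using k l unfolding A_def V'_def by auto
      then have nb: "(k,x) \<notin> piblk r i" "(l,y) \<notin> piblk r i" unfolding piblk_def by auto
      then have bin: "b - piblk r i \<in> restr r \<rho> i" unfolding restr_def using b by blast
      have all: "\<forall>c\<in>restr r \<rho> i. c \<subseteq> S \<or> c \<inter> S = {}" using S(2) unfolding sat_def .
      have disj: "b - piblk r i \<subseteq> S \<or> (b - piblk r i) \<inter> S = {}" by (rule bspec[OF all bin])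
      have kS: "(k,x) \<in> S" unfolding SA using k x by simp
      have kxb: "(k,x) \<in> (b - piblk r i) \<inter> S" using b(2) nb(1) kS by simp
      then have "(b - piblk r i) \<inter> S \<noteq> {}" by (metis empty_iff)
      then have "b - piblk r i \<subseteq> S" using disj by (metis)
      then have "(l,y) \<in> S" using b nb by blast
      then show "l \<in> A" unfolding SA by simp
    qed
    moreover have "A \<subseteq> V'" unfolding A_def by blast
    ultimately have "A = {} \<or> A = V'" using conn' by blast
    then show "S = {} \<or> S = X'" unfolding SA X'_def by auto
  qed
  moreover have "i \<in> {1..n}" using i(1) unfolding V_def .
  ultimately show ?thesis using prest unfolding X'_def V'_def V_def by auto
qed

end
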